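(* In the adjusted bounding box center construction described in the context, let $i\in\{1,\dots,k\}$ be such that $B(P_i)$ is incomplete, and (in the coordinate system of $P_i$, after the normalizing reflection/rotation) suppose $q^{\star}_i\in\{(x,y)\in B(P_i): x\ge {q_i}_x \text{ or } y\ge {q_i}_y\}$. Then $\lVert q^{\star}_i-q_i\rVert_1\le \tfrac12\, l(B(P_i))$.
   Context: Setting: $P\subset\mathbb{R}^2$ finite, partitioned into nonempty $P_1,\dots,P_k$. A rectilinear Steiner tree for finite $S\subset\mathbb{R}^2$ is a tree embedded in the plane with horizontal/vertical segments as edges whose vertex set contains $S$; length = sum of $\ell_1$ edge lengths. A two-level rectilinear Steiner tree is $(T_{top},T_1,\dots,T_k)$ with $T_i$ a rectilinear Steiner tree for $P_i$ and $T_{top}$ a rectilinear Steiner tree intersecting every $T_i$; length $l(T_{top})+\sum_i l(T_i)$. $B(S)$ is the smallest axis-parallel rectangle containing $S$, $l(B(S))$ its width plus height. $\beta\in[0,1]$ is a parameter. Connection points: the coordinate system of $P_i$ has its origin at the center of $B(P_i)$. $B(P_i)$ is complete if $P_i$ has a point in each of the four quadrants of this coordinate system, otherwise incomplete. If incomplete, after a reflection/rotation of the plane (by a symmetry of the axis-parallel square), assume no point of $P_i$ lies in the lower-left quadrant and the width of $B(P_i)$ is at least its height; let $t_i^{\max}$ be half the height of $B(P_i)$, and in the coordinates of $P_i$ set $t_i^1=\max\{s\in[0,t_i^{\max}]: P_i\cap\{(x,y):x<s,y<s\}=\emptyset\}$, $t_i^2=\min\{s\in[0,t_i^{\max}]: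 P_i\cap\{(x,y):x>s,y>s\}=\emptyset\}$, $t_i=\min\{t_i^1,t_i^2,\beta t_i^{\max}\}$, and $q_i:=(t_i,t_i)$ in these coordinates. $T^{\star}=(T^{\star}_{top},T^{\star}_1,\dots,T^{\star}_k)$ is a minimum two-level rectilinear Steiner tree, chosen among all minimum ones with $T^{\star}_{top}$ as large as possible, so that for each $i$ there is a connection point $q^{\star}_i\in T^{\star}_{top}\cap T^{\star}_i\cap B(P_i)$. *)

theory Defs
  imports "HOL-Analysis.Analysis"
begin

type_synonym point = "real \<times> real"

definition l1 :: "point \<Rightarrow> point \<Rightarrow> real" where
  "l1 a b = \<bar>fst a - fst b\<bar> + \<bar>snd a - snd b\<bar>"

definition xmin :: "point set \<Rightarrow> real" where "xmin S = Min (fst ` S)"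
definition xmax :: "point set \<Rightarrow> real" where "xmax S = Max (fst ` S)"
definition ymin :: "point set \<Rightarrow> real" where "ymin S = Min (snd ` S)"
definition ymax :: "point set \<Rightarrow> real" where "ymax S = Max (snd ` S)"

definition bbox :: "point set \<Rightarrow> point set" where
  "bbox S = {p. xmin S \<le> fst p \<and> fst p \<le> xmax S \<and> ymin S \<le> snd p \<and> snd p \<le> ymax S}"

definition bwidth :: "point set \<Rightarrow> real" where "bwidth S = xmax S - xmin S"
definition bheight :: "point set \<Rightarrow> real" where "bheight S = ymax S - ymin S"

definition lbox :: "point set \<Rightarrow> real" where "lbox S = bwidth S + bheight S"

definition bcenter :: "point set \<Rightarrow> point" where
  "bcenter S = ((xmin S + xmax S) / 2, (ymin S + ymax S) / 2)"

definition local_coords :: "point set \<Rightarrow> point \<Rightarrow> point" where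
  "local_coords S p = p - bcenter S"

text \<open>Complete: a point in each of the four (open) quadrants of the coordinate system of S.\<close>
definition complete_box :: "point set \<Rightarrow> bool" where
  "complete_box S \<longleftrightarrow>
     (\<forall>a\<in>{1,-1::real}. \<forall>b\<in>{1,-1::real}.
        \<exists>p\<in>S. a * fst (local_coords S p) > 0 \<and> b * snd (local_coords S p) > 0)"

text \<open>The 8 symmetries of the axis-parallel square (about the origin).\<close>
definition square_syms :: "(point \<Rightarrow> point) set" where
  "square_syms =
     {(\<lambda>(x, y). (a * x, b * y)) | a b. a \<in> {1, -1::real} \<and> b \<in> {1, -1::real}} \<union>
     {(\<lambda>(x, y). (a * y, b * x)) | a b. a \<in> {1, -1::real} \<and> b \<in> {1, -1::real}}"

definition normalized_set :: "(point \<Rightarrow> point) \<Rightarrow> point set \<Rightarrow> point set" where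
  "normalized_set g S = (\<lambda>p. g (local_coords S p)) ` S"

definition normalizing :: "(point \<Rightarrow> point) \<Rightarrow> point set \<Rightarrow> bool" where
  "normalizing g S \<longleftrightarrow> g \<in> square_syms \<and>
     (\<forall>p\<in>normalized_set g S. \<not> (fst p < 0 \<and> snd p < 0)) \<and>
     bwidth (normalized_set g S) \<ge> bheight (normalized_set g S)"

definition t_max :: "(point \<Rightarrow> point) \<Rightarrow> point set \<Rightarrow> real" where
  "t_max g S = bheight (normalized_set g S) / 2"

definition t_one :: "(point \<Rightarrow> point) \<Rightarrow> point set \<Rightarrow> real" where
  "t_one g S = Sup {s. 0 \<le> s \<and> s \<le> t_max g S \<and>
       (\<forall>p\<in>normalized_set g S. \<not> (fst p < s \<and> snd p < s))}"

definition t_two :: "(point \<Rightarrow> point) \<Rightarrow> point set \<Rightarrow> real" where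
  "t_two g S = Inf {s. 0 \<le> s \<and> s \<le> t_max g S \<and>
       (\<forall>p\<in>normalized_set g S. \<not> (fst p > s \<and> snd p > s))}"

definition t_conn :: "real \<Rightarrow> (point \<Rightarrow> point) \<Rightarrow> point set \<Rightarrow> real" where
  "t_conn \<beta> g S = min (min (t_one g S) (t_two g S)) (\<beta> * t_max g S)"

text \<open>q_i = (t_i, t_i) in the (normalised) coordinates of S, expressed in the original plane.\<close>
definition conn_point :: "real \<Rightarrow> (point \<Rightarrow> point) \<Rightarrow> point set \<Rightarrow> point" where
  "conn_point \<beta> g S = bcenter S + inv g (t_conn \<beta> g S, t_conn \<beta> g S)"

text \<open>An embedded tree given by its vertex set V and its (oriented) edge set E;
  each edge is the straight segment between its endpoints.\<close>
type_synonym rtree = "point set \<times> (point \<times> point) set"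

definition adj :: "rtree \<Rightarrow> (point \<times> point) set" where
  "adj T = snd T \<union> (snd T)\<inverse>"

definition is_rtree :: "rtree \<Rightarrow> bool" where
  "is_rtree T \<longleftrightarrow> (let V = fst T; E = snd T in
     finite V \<and> V \<noteq> {} \<and> E \<subseteq> V \<times> V \<and>
     (\<forall>(a, b)\<in>E. a \<noteq> b \<and> (fst a = fst b \<or> snd a = snd b)) \<and>
     (\<forall>(a, b)\<in>E. \<forall>v\<in>V. v \<in> closed_segment a b \<longrightarrow> v = a \<or> v = b) \<and>
     (\<forall>(a, b)\<in>E. \<forall>(c, d)\<in>E. (a, b) \<noteq> (c, d) \<longrightarrow>
        closed_segment a b \<inter> closed_segment c d \<subseteq> {a, b} \<inter> {c, d}) \<and>
     (\<forall>u\<in>V. \<forall>v\<in>V. (u, v) \<in> (adj T)\<^sup>*) \<and>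
     card E + 1 = card V)"

definition is_rst :: "point set \<Rightarrow> rtree \<Rightarrow> bool" where
  "is_rst S T \<longleftrightarrow> is_rtree T \<and> S \<subseteq> fst T"

definition tree_points :: "rtree \<Rightarrow> point set" where
  "tree_points T = fst T \<union> (\<Union>(a, b)\<in>snd T. closed_segment a b)"

definition tree_length :: "rtree \<Rightarrow> real" where
  "tree_length T = (\<Sum>(a, b)\<in>snd T. l1 a b)"

definition is_two_level :: "nat \<Rightarrow> (nat \<Rightarrow> point set) \<Rightarrow> rtree \<Rightarrow> (nat \<Rightarrow> rtree) \<Rightarrow> bool" where
  "is_two_level k P Ttop T \<longleftrightarrow> is_rst {} Ttop \<and>
     (\<forall>i\<in>{1..k}. is_rst (P i) (T i) \<and> tree_points Ttop \<inter> tree_points (T i) \<noteq> {})"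

definition two_level_length :: "nat \<Rightarrow> rtree \<Rightarrow> (nat \<Rightarrow> rtree) \<Rightarrow> real" where
  "two_level_length k Ttop T = tree_length Ttop + (\<Sum>i\<in>{1..k}. tree_length (T i))"

definition min_two_level :: "nat \<Rightarrow> (nat \<Rightarrow> point set) \<Rightarrow> rtree \<Rightarrow> (nat \<Rightarrow> rtree) \<Rightarrow> bool" where
  "min_two_level k P Ttop T \<longleftrightarrow> is_two_level k P Ttop T \<and>
     (\<forall>Ttop' T'. is_two_level k P Ttop' T' \<longrightarrow>
        two_level_length k Ttop T \<le> two_level_length k Ttop' T')"

definition opt_two_level :: "nat \<Rightarrow> (nat \<Rightarrow> point set) \<Rightarrow> rtree \<Rightarrow> (nat \<Rightarrow> rtree) \<Rightarrow> bool" where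
  "opt_two_level k P Ttop T \<longleftrightarrow> min_two_level k P Ttop T \<and>
     (\<forall>Ttop' T'. min_two_level k P Ttop' T' \<longrightarrow> tree_length Ttop' \<le> tree_length Ttop)"

end

theory Submission imports Defs begin

lemma sym_Max_Min:
  fixes A :: "real set" and b :: real
  assumes "finite A" "A \<noteq> {}" "b \<in> {1,-1}"
  defines "h \<equiv> \<lambda>v. b * (v - (Min A + Max A) / 2)"
  shows "Max (h ` A) + Min (h ` A) = 0"
proof -
  let ?d = "(Min A + Max A) / 2"
  have fin: "finite (h ` A)" using assms by simp
  have MA: "Max A \<in> A" using Max_in assms(1,2) by blast
  have mA: "Min A \<in> A" using Min_in assms(1,2) by blast
  have Mge: "\<And>v. v \<in> A \<Longrightarrow> v \<le> Max A" using Max_ge assms(1) by blast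
  have mle: "\<And>v. v \<in> A \<Longrightarrow> Min A \<le> v" using Min_le assms(1) by blast
  show ?thesis
  proof (cases "b = 1")
    case True
    have "Max (h ` A) = Max A - ?d"
    proof (rule Max_eqI[OF fin])
      show "\<And>y. y \<in> h ` A \<Longrightarrow> y \<le> Max A - ?d"
      proof -
        fix y assume "y \<in> h ` A"
        then obtain v where v: "v \<in> A" "y = h v" by blast
        show "y \<le> Max A - ?d" using Mge[OF v(1)] unfolding v(2) h_def True by (simp add: field_simps)
      qed
      show "Max A - ?d \<in> h ` A" using MA unfolding h_def True by force
    qed
    moreover have "Min (h ` A) = Min A - ?d"
    proof (rule Min_eqI[OF fin])
      show "\<And>y. y \<in> h ` A \<Longrightarrow> Min A - ?d \<le> y"
      proof -
        fix y assume "y \<in> h ` A"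
        then obtain v where v: "v \<in> A" "y = h v" by blast
        show "Min A - ?d \<le> y" using mle[OF v(1)] unfolding v(2) h_def True by (simp add: field_simps)
      qed
      show "Min A - ?d \<in> h ` A" using mA unfolding h_def True by force
    qed
    ultimately show ?thesis by simp
  next
    case False
    then have b: "b = -1" using assms by auto
    have "Max (h ` A) = ?d - Min A"
    proof (rule Max_eqI[OF fin])
      show "\<And>y. y \<in> h ` A \<Longrightarrow> y \<le> ?d - Min A"
      proof -
        fix y assume "y \<in> h ` A"
        then obtain v where v: "v \<in> A" "y = h v" by blast
        show "y \<le> ?d - Min A" using mle[OF v(1)] unfolding v(2) h_def b by (simp add: field_simps)
      qed
      show "?d - Min A \<in> h ` A" using mA unfolding h_def b by force
    qed
    moreover have "Min (h ` A) = ?d - Max A"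
    proof (rule Min_eqI[OF fin])
      show "\<And>y. y \<in> h ` A \<Longrightarrow> ?d - Max A \<le> y"
      proof -
        fix y assume "y \<in> h ` A"
        then obtain v where v: "v \<in> A" "y = h v" by blast
        show "?d - Max A \<le> y" using Mge[OF v(1)] unfolding v(2) h_def b by (simp add: field_simps)
      qed
      show "?d - Max A \<in> h ` A" using MA unfolding h_def b by force
    qed
    ultimately show ?thesis by simp
  qed
qed

lemma sym_cases:
  assumes "g \<in> square_syms"
  obtains a b where "a \<in> {1,-1::real}" "b \<in> {1,-1::real}" "g = (\<lambda>(x, y). (a * x, b * y))"
  | a b where "a \<in> {1,-1::real}" "b \<in> {1,-1::real}" "g = (\<lambda>(x, y). (a * y, b * x))"
  using assms unfolding square_syms_def by blast

lemma tmax_facts: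
  assumes S: "finite S" "S \<noteq> {}" and g: "g \<in> square_syms"
  shows "0 \<le> t_max g S" "\<forall>p\<in>normalized_set g S. snd p \<le> t_max g S"
proof -
  let ?N = "normalized_set g S"
  obtain f b where b: "b \<in> {1,-1::real}" and
    f: "\<And>p. snd (g (local_coords S p)) = b * (f p - (Min (f ` S) + Max (f ` S)) / 2)"
  proof (cases rule: sym_cases[OF g])
    case (1 a b)
    show ?thesis
      by (rule that[of b snd]) (use 1 in \<open>auto simp: local_coords_def bcenter_def ymin_def ymax_def split: prod.splits\<close>)
  next
    case (2 a b)
    show ?thesis
      by (rule that[of b fst]) (use 2 in \<open>auto simp: local_coords_def bcenter_def xmin_def xmax_def split: prod.splits\<close>)
  qed
  define h where "h = (\<lambda>v. b * (v - (Min (f ` S) + Max (f ` S)) / 2))"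
  have eq: "snd ` ?N = h ` (f ` S)"
    unfolding normalized_set_def h_def using f by (auto simp: image_image)
  have sum0: "ymax ?N + ymin ?N = 0"
    unfolding ymax_def ymin_def eq h_def
    by (rule sym_Max_Min) (use S b in auto)
  have finN: "finite (snd ` ?N)" "snd ` ?N \<noteq> {}" using S unfolding normalized_set_def by auto
  have le: "ymin ?N \<le> ymax ?N" unfolding ymin_def ymax_def
    using finN Min_le Max_in by (metis Max_ge order_trans)
  have tm: "t_max g S = ymax ?N" using sum0 unfolding t_max_def bheight_def by simp
  show "0 \<le> t_max g S" using tm sum0 le by simp
  show "\<forall>p\<in>?N. snd p \<le> t_max g S" using tm finN unfolding ymax_def by auto
qed

lemma final_ineq:
  fixes X Y A B t :: real
  assumes "\<bar>X\<bar> \<le> A" "\<bar>Y\<bar> \<le> B" "0 \<le> t" "X \<ge> t \<or> Y \<ge> t"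
  shows "\<bar>X - t\<bar> + \<bar>Y - t\<bar> \<le> A + B"
  using assms unfolding abs_le_iff abs_if by argo

theorem lemma7:
  fixes k :: nat and P :: "nat \<Rightarrow> point set" and \<beta> :: real
    and Ttop :: rtree and T :: "nat \<Rightarrow> rtree" and qstar :: point
    and g :: "point \<Rightarrow> point" and i :: nat
  assumes fin: "\<And>j. j \<in> {1..k} \<Longrightarrow> finite (P j) \<and> P j \<noteq> {}"
    and disj: "\<And>j j'. j \<in> {1..k} \<Longrightarrow> j' \<in> {1..k} \<Longrightarrow> j \<noteq> j' \<Longrightarrow> P j \<inter> P j' = {}"
    and beta: "0 \<le> \<beta>" "\<beta> \<le> 1"
    and opt: "opt_two_level k P Ttop T"
    and i: "i \<in> {1..k}"
    and qstar: "qstar \<in> tree_points Ttop \<inter> tree_points (T i) \<inter> bbox (P i)"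
    and incomplete: "\<not> complete_box (P i)"
    and g: "normalizing g (P i)"
    and region: "fst (g (local_coords (P i) qstar)) \<ge> t_conn \<beta> g (P i) \<or>
                 snd (g (local_coords (P i) qstar)) \<ge> t_conn \<beta> g (P i)"
  shows "l1 qstar (conn_point \<beta> g (P i)) \<le> lbox (P i) / 2"
proof -
  define S where "S = P i"
  have S: "finite S" "S \<noteq> {}" using fin[OF i] S_def by auto
  have gs: "g \<in> square_syms" and nn: "\<forall>p\<in>normalized_set g S. \<not> (fst p < 0 \<and> snd p < 0)"
    using g unfolding normalizing_def S_def by auto
  note tm = tmax_facts[OF S gs]
  define t where "t = t_conn \<beta> g S"
  have t1: "0 \<le> t_one g S" unfolding t_one_def
    by (rule cSup_upper) (use nn tm in \<open>auto intro!: bdd_aboveI[where M="t_max g S"]\<close>)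
  have t2: "0 \<le> t_two g S" unfolding t_two_def
  proof (rule cInf_greatest)
    show "{s. 0 \<le> s \<and> s \<le> t_max g S \<and> (\<forall>p\<in>normalized_set g S. \<not> (s < fst p \<and> s < snd p))} \<noteq> {}"
    proof -
      have "t_max g S \<in> {s. 0 \<le> s \<and> s \<le> t_max g S \<and> (\<forall>p\<in>normalized_set g S. \<not> (s < fst p \<and> s < snd p))}"
        using tm by force
      then show ?thesis by blast
    qed
  qed auto
  have t0: "0 \<le> t" unfolding t_def t_conn_def using t1 t2 tm beta by simp
  define u where "u = local_coords S qstar"
  have qb: "qstar \<in> bbox S" using qstar S_def by auto
  have ux: "\<bar>fst u\<bar> \<le> bwidth S / 2" and uy: "\<bar>snd u\<bar> \<le> bheight S / 2"
  proof -
    have "xmin S \<le> fst qstar" "fst qstar \<le> xmax S" "ymin S \<le> snd qstar" "snd qstar \<le> ymax S"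
      using qb unfolding bbox_def by auto
    moreover have "fst u = fst qstar - (xmin S + xmax S) / 2" "snd u = snd qstar - (ymin S + ymax S) / 2"
      unfolding u_def local_coords_def bcenter_def by auto
    ultimately have "\<bar>fst u\<bar> \<le> bwidth S / 2 \<and> \<bar>snd u\<bar> \<le> bheight S / 2"
      unfolding bwidth_def bheight_def abs_le_iff by argo
    then show "\<bar>fst u\<bar> \<le> bwidth S / 2" "\<bar>snd u\<bar> \<le> bheight S / 2" by auto
  qed
  have reg: "fst (g u) \<ge> t \<or> snd (g u) \<ge> t" using region unfolding u_def t_def S_def .
  have l1eq: "\<And>v. l1 qstar (bcenter S + v) = \<bar>fst u - fst v\<bar> + \<bar>snd u - snd v\<bar>"
    unfolding l1_def u_def local_coords_def by (simp add: algebra_simps)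
  have goal: "l1 qstar (bcenter S + inv g (t, t)) \<le> lbox S / 2"
  proof (cases rule: sym_cases[OF gs])
    case (1 a b)
    have inj: "inj g" unfolding inj_def 1 using 1(1,2) by auto
    have "g (a * t, b * t) = (t, t)" using 1 by auto
    then have iv: "inv g (t, t) = (a * t, b * t)" using inv_f_f[OF inj] by metis
    have gu: "g u = (a * fst u, b * snd u)" using 1 by (simp add: case_prod_beta)
    have "\<bar>fst u - a * t\<bar> + \<bar>snd u - b * t\<bar> = \<bar>a * fst u - t\<bar> + \<bar>b * snd u - t\<bar>"
      using 1(1,2) by (auto simp: abs_minus_commute)
    also have "\<dots> \<le> bwidth S / 2 + bheight S / 2"
      by (rule final_ineq) (use 1(1,2) ux uy t0 reg gu in auto)
    finally show ?thesis using l1eq iv unfolding lbox_def by simp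
  next
    case (2 a b)
    have inj: "inj g" unfolding inj_def 2 using 2(1,2) by auto
    have "g (b * t, a * t) = (t, t)" using 2 by auto
    then have iv: "inv g (t, t) = (b * t, a * t)" using inv_f_f[OF inj] by metis
    have gu: "g u = (a * snd u, b * fst u)" using 2 by (simp add: case_prod_beta)
    have "\<bar>fst u - b * t\<bar> + \<bar>snd u - a * t\<bar> = \<bar>b * fst u - t\<bar> + \<bar>a * snd u - t\<bar>"
      using 2(1,2) by (auto simp: abs_minus_commute)
    also have "\<dots> \<le> bwidth S / 2 + bheight S / 2"
      by (rule final_ineq) (use 2(1,2) ux uy t0 reg gu in auto)
    finally show ?thesis using l1eq iv unfolding lbox_def by simp
  qed
  then show ?thesis unfolding conn_point_def t_def S_def .
qed

end
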